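(* Assume $L_1\subseteq\bigcup_{\alpha\in\Sigma^\kappa}\Sigma^*\alpha\Sigma^*\bar\alpha$ and $L_2\subseteq\bigcup_{\alpha\in\Sigma^\kappa}\alpha\Sigma^*\bar\alpha\Sigma^*$. Let $M=\mathcal{I}\times\mathcal{F}$ where $\mathcal{I},\mathcal{F}$ are the initial and final states of $\mathcal{A}$; for $\mu=(I,F)\in M$ with $F=((d_1,d_2),e_1,e_2,\kappa)$ let $R_\mu$ be the set of labels of paths in $\mathcal{A}$ from $I$ to $F$ and $B_\mu=B(d_1,d_2,e_1,e_2)$. Let $\sigma=\max_{\mu\in M}\lambda_{B_\mu}$, $\rho=\max_{\mu\in M}\lambda_{R_\mu}$ and $\lambda=\max\{\lambda_{L_1},\lambda_{L_2}\}$. Then $\lambda=\max\{\sigma,\rho\}$.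
   Context: $\Sigma$ is a finite alphabet with at least two letters with an involution $a\mapsto\bar a$ ($\bar{\bar a}=a$), extended to words by $\overline{a_1\cdots a_m}=\bar a_m\cdots\bar a_1$ and to languages elementwise. $\kappa$ is a fixed positive integer. $L_1,L_2$ are regular; $\mathcal{A}_1=(Q_1,\Sigma,E_1,\{q_{01}\},F_1)$ is a complete DFA accepting $L_1$, $\mathcal{A}_2=(Q_2,\Sigma,E_2,\{q_{02}\},F_2)$ a complete DFA accepting $\overline{L_2}$; $p\cdot w$ is the state reached from $p$ on $w$. Growth indicator: $\lambda_L=\inf\{\lambda\ge0:\exists c>0\ \forall m: |L\cap\Sigma^m|\le c\lambda^m\}$. Construction of $\mathcal{A}$: $Q_{12}=\{(q_{01}\cdot w,q_{02}\cdot w):w\in\Sigma^*\}$ with $(p_1,p_2)\cdot w=(p_1\cdot w,p_2\cdot w)$. For $(p_1,p_2,q_1,q_2)\in Q_1\times Q_2\times Q_1\times Q_2$ let $B(p_1,p_2,q_1,q_2)=\{w:p_1\cdot w=q_1,\ p_2\cdot\bar w=q_2\}$; the quadruple is a basic bridge if this set is nonempty. States of $\mathcal{A}$ are all $((p_1,p_2),q_1,q_2,\ell)$ with $(p_1,p_2)\in Q_{12}$, $q_i\in Q_i$, $\ell\in\{0,\dots,\kappa\}$, $(p_1,p_2,q_1,q_2)$ a basic bridge. For $a\in\Sigma$, $P\in Q_{12}$, $q_i\in Q_i$, there is an $a$-arc from $(P,q_1\cdot\bar a,q_2\cdot\bar a,\ell)$ to $(P\cdot a,q_1,q_2,\ell')$,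 provided both are states, exactly when: $\ell=\ell'=0$ and $q_1\cdot\bar a\notin F_1$, $q_2\cdot\bar a\notin F_2$; or $\ell=0,\ell'=1$ and ($q_1\cdot\bar a\in F_1$ or $q_2\cdot\bar a\in F_2$); or $1\le\ell<\kappa$ and $\ell'=\ell+1$. Initial states: $((q_{01},q_{02}),q_1',q_2',0)$; final states: those with $\ell=\kappa$. $\mathcal{A}$ is trimmed: states not reachable from an initial state, or from which no final state is reachable, are removed. *)

theory Defs
  imports Complex_Main
begin

definition wbar :: "('a \<Rightarrow> 'a) \<Rightarrow> 'a list \<Rightarrow> 'a list" where
  "wbar bar w = rev (map bar w)"

definition growth :: "'a list set \<Rightarrow> real" where
  "growth L = Inf {l::real. l \<ge> 0 \<and>
      (\<exists>c>0. \<forall>m::nat. real (card {w\<in>L. length w = m}) \<le> c * l ^ m)}"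

definition dfa_lang :: "('q \<Rightarrow> 'a \<Rightarrow> 'q) \<Rightarrow> 'q \<Rightarrow> 'q set \<Rightarrow> 'a list set" where
  "dfa_lang d q0 F = {w. foldl d q0 w \<in> F}"

definition Bset :: "('a \<Rightarrow> 'a) \<Rightarrow> ('q1 \<Rightarrow> 'a \<Rightarrow> 'q1) \<Rightarrow> ('q2 \<Rightarrow> 'a \<Rightarrow> 'q2)
    \<Rightarrow> 'q1 \<Rightarrow> 'q2 \<Rightarrow> 'q1 \<Rightarrow> 'q2 \<Rightarrow> 'a list set" where
  "Bset bar d1 d2 p1 p2 q1 q2 = {w. foldl d1 p1 w = q1 \<and> foldl d2 p2 (wbar bar w) = q2}"

definition Q12 :: "('q1 \<Rightarrow> 'a \<Rightarrow> 'q1) \<Rightarrow> 'q1 \<Rightarrow> ('q2 \<Rightarrow> 'a \<Rightarrow> 'q2) \<Rightarrow> 'q2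
    \<Rightarrow> ('q1 \<times> 'q2) set" where
  "Q12 d1 q01 d2 q02 = {(foldl d1 q01 w, foldl d2 q02 w) | w. True}"

type_synonym ('q1, 'q2) astate = "('q1 \<times> 'q2) \<times> 'q1 \<times> 'q2 \<times> nat"

definition aut_states :: "('a \<Rightarrow> 'a) \<Rightarrow> nat \<Rightarrow> ('q1 \<Rightarrow> 'a \<Rightarrow> 'q1) \<Rightarrow> 'q1
    \<Rightarrow> ('q2 \<Rightarrow> 'a \<Rightarrow> 'q2) \<Rightarrow> 'q2 \<Rightarrow> ('q1, 'q2) astate set" where
  "aut_states bar \<kappa> d1 q01 d2 q02 =
     {(P, q1, q2, l). P \<in> Q12 d1 q01 d2 q02 \<and> l \<le> \<kappa> \<and>
        Bset bar d1 d2 (fst P) (snd P) q1 q2 \<noteq> {}}"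

definition aut_arc :: "('a \<Rightarrow> 'a) \<Rightarrow> nat \<Rightarrow> ('q1 \<Rightarrow> 'a \<Rightarrow> 'q1) \<Rightarrow> 'q1 \<Rightarrow> 'q1 set
    \<Rightarrow> ('q2 \<Rightarrow> 'a \<Rightarrow> 'q2) \<Rightarrow> 'q2 \<Rightarrow> 'q2 set
    \<Rightarrow> ('q1, 'q2) astate \<Rightarrow> 'a \<Rightarrow> ('q1, 'q2) astate \<Rightarrow> bool" where
  "aut_arc bar \<kappa> d1 q01 F1 d2 q02 F2 s a t \<longleftrightarrow>
     s \<in> aut_states bar \<kappa> d1 q01 d2 q02 \<and> t \<in> aut_states bar \<kappa> d1 q01 d2 q02 \<and>
     (\<exists>P q1 q2 l l'.
        s = (P, d1 q1 (bar a), d2 q2 (bar a), l) \<and>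
        t = ((d1 (fst P) a, d2 (snd P) a), q1, q2, l') \<and>
        ((l = 0 \<and> l' = 0 \<and> d1 q1 (bar a) \<notin> F1 \<and> d2 q2 (bar a) \<notin> F2) \<or>
         (l = 0 \<and> l' = 1 \<and> (d1 q1 (bar a) \<in> F1 \<or> d2 q2 (bar a) \<in> F2)) \<or>
         (1 \<le> l \<and> l < \<kappa> \<and> l' = l + 1)))"

definition aut_init :: "('a \<Rightarrow> 'a) \<Rightarrow> nat \<Rightarrow> ('q1 \<Rightarrow> 'a \<Rightarrow> 'q1) \<Rightarrow> 'q1
    \<Rightarrow> ('q2 \<Rightarrow> 'a \<Rightarrow> 'q2) \<Rightarrow> 'q2 \<Rightarrow> ('q1, 'q2) astate set" where
  "aut_init bar \<kappa> d1 q01 d2 q02 =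
     {s \<in> aut_states bar \<kappa> d1 q01 d2 q02. \<exists>q1 q2. s = ((q01, q02), q1, q2, 0)}"

definition aut_fin :: "('a \<Rightarrow> 'a) \<Rightarrow> nat \<Rightarrow> ('q1 \<Rightarrow> 'a \<Rightarrow> 'q1) \<Rightarrow> 'q1
    \<Rightarrow> ('q2 \<Rightarrow> 'a \<Rightarrow> 'q2) \<Rightarrow> 'q2 \<Rightarrow> ('q1, 'q2) astate set" where
  "aut_fin bar \<kappa> d1 q01 d2 q02 =
     {s \<in> aut_states bar \<kappa> d1 q01 d2 q02. snd (snd (snd s)) = \<kappa>}"

inductive lpath :: "'s set \<Rightarrow> ('s \<Rightarrow> 'a \<Rightarrow> 's \<Rightarrow> bool) \<Rightarrow> 's \<Rightarrow> 'a list \<Rightarrow> 's \<Rightarrow> bool"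
  for V E where
  lpath_nil: "s \<in> V \<Longrightarrow> lpath V E s [] s"
| lpath_cons: "E s a s' \<Longrightarrow> lpath V E s' w t \<Longrightarrow> lpath V E s (a # w) t"

definition aut_useful :: "('a \<Rightarrow> 'a) \<Rightarrow> nat \<Rightarrow> ('q1 \<Rightarrow> 'a \<Rightarrow> 'q1) \<Rightarrow> 'q1 \<Rightarrow> 'q1 set
    \<Rightarrow> ('q2 \<Rightarrow> 'a \<Rightarrow> 'q2) \<Rightarrow> 'q2 \<Rightarrow> 'q2 set \<Rightarrow> ('q1, 'q2) astate set" where
  "aut_useful bar \<kappa> d1 q01 F1 d2 q02 F2 =
     {s \<in> aut_states bar \<kappa> d1 q01 d2 q02.
        (\<exists>i \<in> aut_init bar \<kappa> d1 q01 d2 q02. \<exists>w.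
            lpath (aut_states bar \<kappa> d1 q01 d2 q02) (aut_arc bar \<kappa> d1 q01 F1 d2 q02 F2) i w s) \<and>
        (\<exists>f \<in> aut_fin bar \<kappa> d1 q01 d2 q02. \<exists>w.
            lpath (aut_states bar \<kappa> d1 q01 d2 q02) (aut_arc bar \<kappa> d1 q01 F1 d2 q02 F2) s w f)}"

definition taut_arc :: "('a \<Rightarrow> 'a) \<Rightarrow> nat \<Rightarrow> ('q1 \<Rightarrow> 'a \<Rightarrow> 'q1) \<Rightarrow> 'q1 \<Rightarrow> 'q1 set
    \<Rightarrow> ('q2 \<Rightarrow> 'a \<Rightarrow> 'q2) \<Rightarrow> 'q2 \<Rightarrow> 'q2 set
    \<Rightarrow> ('q1, 'q2) astate \<Rightarrow> 'a \<Rightarrow> ('q1, 'q2) astate \<Rightarrow> bool" where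
  "taut_arc bar \<kappa> d1 q01 F1 d2 q02 F2 s a t \<longleftrightarrow>
     aut_arc bar \<kappa> d1 q01 F1 d2 q02 F2 s a t \<and>
     s \<in> aut_useful bar \<kappa> d1 q01 F1 d2 q02 F2 \<and> t \<in> aut_useful bar \<kappa> d1 q01 F1 d2 q02 F2"

definition aut_M :: "('a \<Rightarrow> 'a) \<Rightarrow> nat \<Rightarrow> ('q1 \<Rightarrow> 'a \<Rightarrow> 'q1) \<Rightarrow> 'q1 \<Rightarrow> 'q1 set
    \<Rightarrow> ('q2 \<Rightarrow> 'a \<Rightarrow> 'q2) \<Rightarrow> 'q2 \<Rightarrow> 'q2 set
    \<Rightarrow> (('q1, 'q2) astate \<times> ('q1, 'q2) astate) set" where
  "aut_M bar \<kappa> d1 q01 F1 d2 q02 F2 =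
     (aut_init bar \<kappa> d1 q01 d2 q02 \<inter> aut_useful bar \<kappa> d1 q01 F1 d2 q02 F2) \<times>
     (aut_fin bar \<kappa> d1 q01 d2 q02 \<inter> aut_useful bar \<kappa> d1 q01 F1 d2 q02 F2)"

definition R_mu :: "('a \<Rightarrow> 'a) \<Rightarrow> nat \<Rightarrow> ('q1 \<Rightarrow> 'a \<Rightarrow> 'q1) \<Rightarrow> 'q1 \<Rightarrow> 'q1 set
    \<Rightarrow> ('q2 \<Rightarrow> 'a \<Rightarrow> 'q2) \<Rightarrow> 'q2 \<Rightarrow> 'q2 set
    \<Rightarrow> ('q1, 'q2) astate \<times> ('q1, 'q2) astate \<Rightarrow> 'a list set" where
  "R_mu bar \<kappa> d1 q01 F1 d2 q02 F2 \<mu> =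
     {w. lpath (aut_useful bar \<kappa> d1 q01 F1 d2 q02 F2) (taut_arc bar \<kappa> d1 q01 F1 d2 q02 F2)
            (fst \<mu>) w (snd \<mu>)}"

definition B_mu :: "('a \<Rightarrow> 'a) \<Rightarrow> ('q1 \<Rightarrow> 'a \<Rightarrow> 'q1) \<Rightarrow> ('q2 \<Rightarrow> 'a \<Rightarrow> 'q2)
    \<Rightarrow> ('q1, 'q2) astate \<times> ('q1, 'q2) astate \<Rightarrow> 'a list set" where
  "B_mu bar d1 d2 \<mu> = (case snd \<mu> of ((p1, p2), e1, e2, _) \<Rightarrow> Bset bar d1 d2 p1 p2 e1 e2)"

text \<open>Maxima over M; convention: the maximum over an empty M is 0 (all growth indicators are >= 0).\<close>
definition sigma_max :: "('a \<Rightarrow> 'a) \<Rightarrow> nat \<Rightarrow> ('q1 \<Rightarrow> 'a \<Rightarrow> 'q1) \<Rightarrow> 'q1 \<Rightarrow> 'q1 set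
    \<Rightarrow> ('q2 \<Rightarrow> 'a \<Rightarrow> 'q2) \<Rightarrow> 'q2 \<Rightarrow> 'q2 set \<Rightarrow> real" where
  "sigma_max bar \<kappa> d1 q01 F1 d2 q02 F2 =
     Max (insert 0 ((\<lambda>\<mu>. growth (B_mu bar d1 d2 \<mu>)) ` aut_M bar \<kappa> d1 q01 F1 d2 q02 F2))"

definition rho_max :: "('a \<Rightarrow> 'a) \<Rightarrow> nat \<Rightarrow> ('q1 \<Rightarrow> 'a \<Rightarrow> 'q1) \<Rightarrow> 'q1 \<Rightarrow> 'q1 set
    \<Rightarrow> ('q2 \<Rightarrow> 'a \<Rightarrow> 'q2) \<Rightarrow> 'q2 \<Rightarrow> 'q2 set \<Rightarrow> real" where
  "rho_max bar \<kappa> d1 q01 F1 d2 q02 F2 =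
     Max (insert 0 ((\<lambda>\<mu>. growth (R_mu bar \<kappa> d1 q01 F1 d2 q02 F2 \<mu>)) ` aut_M bar \<kappa> d1 q01 F1 d2 q02 F2))"

end

theory Submission
  imports Defs
begin


definition cnt :: "'a list set \<Rightarrow> nat \<Rightarrow> nat" where
  "cnt L m = card {w\<in>L. length w = m}"

definition GS :: "'a list set \<Rightarrow> real set" where
  "GS L = {l::real. l \<ge> 0 \<and> (\<exists>c>0. \<forall>m::nat. real (card {w\<in>L. length w = m}) \<le> c * l ^ m)}"

lemma growth_GS: "growth L = Inf (GS L)"
  unfolding growth_def GS_def by simp

lemma finite_len: "finite {w::('a::finite) list. length w = m}"
  using finite_lists_length_eq[of "UNIV::'a set" m] by simp

lemma card_len: "card {w::('a::finite) list. length w = m} = card (UNIV::'a set) ^ m"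
  using card_lists_length_eq[of "UNIV::'a set" m] by simp

lemma finite_lenL: "finite {w\<in>(L::('a::finite) list set). length w = m}"
  by (rule finite_subset[OF _ finite_len[of m]]) auto

lemma cnt_le_card: "cnt (L::('a::finite) list set) m \<le> card (UNIV::'a set) ^ m"
  unfolding cnt_def card_len[symmetric]
  by (rule card_mono[OF finite_len]) auto

lemma GS_ne: "card (UNIV::'a::finite set) \<in> GS (L::'a list set)"
  unfolding GS_def
proof (intro CollectI conjI exI[of _ 1] allI)
  fix m
  have "cnt L m \<le> card (UNIV::'a set) ^ m" by (rule cnt_le_card)
  then show "real (card {w \<in> L. length w = m}) \<le> 1 * real (card (UNIV::'a set)) ^ m"
    unfolding cnt_def by (metis mult_1 of_nat_le_iff of_nat_power)
qed auto

lemma GS_bdd: "bdd_below (GS L)"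
  unfolding GS_def by (rule bdd_belowI[of _ 0]) auto

lemma growth_nonneg: "0 \<le> growth (L::('a::finite) list set)"
proof -
  have "GS L \<noteq> {}" using GS_ne by blast
  then show ?thesis unfolding growth_GS by (rule cInf_greatest) (auto simp: GS_def)
qed

lemma growth_bound:
  assumes "growth (L::('a::finite) list set) < l"
  shows "\<exists>c>0. \<forall>m. real (cnt L m) \<le> c * l ^ m"
proof -
  have "GS L \<noteq> {}" using GS_ne by blast
  then obtain s where s: "s \<in> GS L" "s < l" using cInf_lessD assms growth_GS by metis
  then obtain c where c: "c > 0" "\<forall>m. real (card {w\<in>L. length w = m}) \<le> c * s ^ m" "s \<ge> 0"
    unfolding GS_def by auto
  have "\<forall>m. real (cnt L m) \<le> c * l ^ m"
  proof
    fix m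
    have "s ^ m \<le> l ^ m" using s c by (intro power_mono) auto
    then show "real (cnt L m) \<le> c * l ^ m" using c(1) c(2)[rule_format, of m] unfolding cnt_def
      by (smt (verit) mult_left_mono)
  qed
  then show ?thesis using c by blast
qed

lemma growth_le:
  assumes "g \<ge> 0" and "\<And>e. e > 0 \<Longrightarrow> \<exists>c>0. \<forall>m. real (cnt (L::('a::finite) list set) m) \<le> c * (g + e) ^ m"
  shows "growth L \<le> g"
proof (rule field_le_epsilon)
  fix e :: real assume "e > 0"
  then obtain c where "c > 0" "\<forall>m. real (cnt L m) \<le> c * (g + e) ^ m" using assms(2) by blast
  then have "g + e \<in> GS L" unfolding GS_def cnt_def using assms(1) \<open>e>0\<close> by auto
  then show "growth L \<le> g + e" unfolding growth_GS by (rule cInf_lower[OF _ GS_bdd])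
qed




lemma growth_transfer:
  fixes A L1 L2 :: "('a::finite) list set"
  assumes "\<forall>m. cnt A m \<le> cnt L1 (m + c) + cnt L2 (m + c)"
  shows "growth A \<le> max (growth L1) (growth L2)"
proof (rule growth_le)
  show "0 \<le> max (growth L1) (growth L2)" using growth_nonneg[of L1] by auto
  fix e :: real assume e: "e > 0"
  let ?l = "max (growth L1) (growth L2) + e"
  obtain c1 where c1: "c1 > 0" "\<forall>m. real (cnt L1 m) \<le> c1 * ?l ^ m"
    using growth_bound[of L1 ?l] e by (meson less_add_same_cancel1 max.cobounded1 order_le_less_trans)
  obtain c2 where c2: "c2 > 0" "\<forall>m. real (cnt L2 m) \<le> c2 * ?l ^ m"
    using growth_bound[of L2 ?l] e by (meson less_add_same_cancel1 max.cobounded2 order_le_less_trans)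
  have lpos: "?l > 0" using e growth_nonneg[of L1] by auto
  show "\<exists>c>0. \<forall>m. real (cnt A m) \<le> c * ?l ^ m"
  proof (intro exI[of _ "(c1 + c2) * ?l ^ c"] conjI allI)
    show "0 < (c1 + c2) * ?l ^ c" using c1 c2 lpos by simp
    fix m
    have "real (cnt A m) \<le> real (cnt L1 (m + c)) + real (cnt L2 (m + c))"
      using assms by (metis of_nat_add of_nat_le_iff)
    also have "\<dots> \<le> c1 * ?l ^ (m + c) + c2 * ?l ^ (m + c)" using c1 c2 by (meson add_mono)
    also have "\<dots> = (c1 + c2) * ?l ^ c * ?l ^ m" by (simp add: power_add algebra_simps)
    finally show "real (cnt A m) \<le> (c1 + c2) * ?l ^ c * ?l ^ m" .
  qed
qed

lemma cnt_pref:
  fixes P B :: "('a::finite) list set"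
  assumes "\<forall>u\<in>P. \<exists>t. length t \<le> K \<and> u @ t \<in> B"
  shows "cnt P m \<le> (\<Sum>j\<le>K. cnt B (m + j))"
proof -
  define f where "f u = u @ (SOME t. length t \<le> K \<and> u @ t \<in> B)" for u
  have fin: "\<forall>j\<in>{..K}. finite {w\<in>B. length w = m + j}" using finite_lenL by blast
  have inj: "inj_on f {u\<in>P. length u = m}"
  proof (rule inj_onI)
    fix u v assume "u \<in> {u\<in>P. length u = m}" "v \<in> {u\<in>P. length u = m}" "f u = f v"
    then have "length u = length v" "u @ (SOME t. length t \<le> K \<and> u @ t \<in> B) = v @ (SOME t. length t \<le> K \<and> v @ t \<in> B)"
      unfolding f_def by auto
    then show "u = v" using append_eq_append_conv by blast
  qed
  have sub: "f ` {u\<in>P. length u = m} \<subseteq> (\<Union>j\<in>{..K}. {w\<in>B. length w = m + j})"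
  proof
    fix w assume "w \<in> f ` {u\<in>P. length u = m}"
    then obtain u where u: "u \<in> P" "length u = m" "w = f u" by auto
    have "\<exists>t. length t \<le> K \<and> u @ t \<in> B" using assms u by blast
    then have "length (SOME t. length t \<le> K \<and> u @ t \<in> B) \<le> K \<and> u @ (SOME t. length t \<le> K \<and> u @ t \<in> B) \<in> B"
      by (rule someI_ex)
    then show "w \<in> (\<Union>j\<in>{..K}. {w\<in>B. length w = m + j})" using u unfolding f_def by auto
  qed
  have "cnt P m = card (f ` {u\<in>P. length u = m})" unfolding cnt_def using inj card_image by metis
  also have "\<dots> \<le> card (\<Union>j\<in>{..K}. {w\<in>B. length w = m + j})"
    by (rule card_mono[OF _ sub]) (use fin in auto)
  also have "\<dots> \<le> (\<Sum>j\<le>K. cnt B (m + j))" unfolding cnt_def by (rule card_UN_le) auto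
  finally show ?thesis .
qed

lemma growth_pref:
  fixes P B :: "('a::finite) list set"
  assumes "\<forall>u\<in>P. \<exists>t. length t \<le> K \<and> u @ t \<in> B" and "growth B < l"
  shows "\<exists>c>0. \<forall>m. real (cnt P m) \<le> c * l ^ m"
proof -
  obtain c where c: "c > 0" "\<forall>m. real (cnt B m) \<le> c * l ^ m" using growth_bound assms(2) by blast
  have l0: "l > 0" using assms(2) growth_nonneg[of B] by linarith
  show ?thesis
  proof (intro exI[of _ "c * (\<Sum>j\<le>K. l ^ j)"] conjI allI)
    show "0 < c * (\<Sum>j\<le>K. l ^ j)" using c l0 by (intro mult_pos_pos sum_pos) auto
    fix m
    have "real (cnt P m) \<le> real (\<Sum>j\<le>K. cnt B (m + j))"
      using cnt_pref[OF assms(1), of m] by (simp only: of_nat_le_iff)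
    also have "\<dots> = (\<Sum>j\<le>K. real (cnt B (m + j)))" by (rule of_nat_sum)
    also have "\<dots> \<le> (\<Sum>j\<le>K. c * l ^ (m + j))" by (rule sum_mono) (use c in blast)
    also have "\<dots> = c * (\<Sum>j\<le>K. l ^ j) * l ^ m"
      by (simp add: sum_distrib_left sum_distrib_right power_add algebra_simps)
    finally show "real (cnt P m) \<le> c * (\<Sum>j\<le>K. l ^ j) * l ^ m" .
  qed
qed

definition conc :: "'a list set \<Rightarrow> 'a list set \<Rightarrow> 'a list set" where
  "conc R P = {x @ u | x u. x \<in> R \<and> u \<in> P}"

lemma cnt_conc:
  fixes R P :: "('a::finite) list set"
  shows "cnt (conc R P) m \<le> (\<Sum>k\<le>m. cnt R k * cnt P (m - k))"
proof -
  have eq: "{w\<in>conc R P. length w = m} \<subseteq>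
     (\<Union>k\<in>{..m}. (\<lambda>(x,u). x @ u) ` ({x\<in>R. length x = k} \<times> {u\<in>P. length u = m - k}))"
  proof
    fix w assume "w \<in> {w\<in>conc R P. length w = m}"
    then obtain x u where "x \<in> R" "u \<in> P" "w = x @ u" "length w = m" unfolding conc_def by auto
    then show "w \<in> (\<Union>k\<in>{..m}. (\<lambda>(x,u). x @ u) ` ({x\<in>R. length x = k} \<times> {u\<in>P. length u = m - k}))"
      by (intro UN_I[of "length x"]) (auto intro!: image_eqI[of _ _ "(x,u)"])
  qed
  have "cnt (conc R P) m \<le> card (\<Union>k\<in>{..m}. (\<lambda>(x,u). x @ u) ` ({x\<in>R. length x = k} \<times> {u\<in>P. length u = m - k}))"
    unfolding cnt_def by (rule card_mono[OF _ eq]) (auto intro: finite_lenL)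
  also have "\<dots> \<le> (\<Sum>k\<le>m. card ((\<lambda>(x,u). x @ u) ` ({x\<in>R. length x = k} \<times> {u\<in>P. length u = m - k})))"
    by (rule card_UN_le) auto
  also have "\<dots> \<le> (\<Sum>k\<le>m. cnt R k * cnt P (m - k))"
  proof (rule sum_mono)
    fix k
    show "card ((\<lambda>(x,u). x @ u) ` ({x\<in>R. length x = k} \<times> {u\<in>P. length u = m - k})) \<le> cnt R k * cnt P (m - k)"
      unfolding cnt_def card_cartesian_product[symmetric]
      by (rule card_image_le) (intro finite_cartesian_product finite_lenL)
  qed
  finally show ?thesis .
qed

lemma geo_bound:
  fixes r :: real assumes "0 \<le> r" "r < 1"
  shows "(\<Sum>k\<le>m. r ^ (m - k)) \<le> 1 / (1 - r)"
proof -
  have "(\<Sum>k\<le>m. r ^ (m - k)) = (\<Sum>k<Suc m. r ^ k)"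
    by (subst sum.nat_diff_reindex[symmetric]) (simp add: lessThan_Suc_atMost)
  also have "\<dots> = (1 - r ^ Suc m) / (1 - r)" using sum_gp_strict[of r "Suc m"] assms by auto
  also have "\<dots> \<le> 1 / (1 - r)" using assms by (intro divide_right_mono) auto
  finally show ?thesis .
qed

lemma growth_conc:
  fixes R P :: "('a::finite) list set"
  assumes "\<forall>k. real (cnt R k) \<le> c1 * a ^ k" "\<forall>k. real (cnt P k) \<le> c2 * b ^ k"
    and "0 \<le> b" "b < a" "c1 > 0" "c2 > 0"
  shows "\<exists>c>0. \<forall>m. real (cnt (conc R P) m) \<le> c * a ^ m"
proof (intro exI[of _ "c1 * c2 / (1 - b / a)"] conjI allI)
  have a0: "a > 0" using assms by linarith
  then have r: "0 \<le> b / a" "b / a < 1" using assms by auto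
  show "0 < c1 * c2 / (1 - b / a)" using assms r by auto
  fix m
  have "real (cnt (conc R P) m) \<le> real (\<Sum>k\<le>m. cnt R k * cnt P (m - k))"
    using cnt_conc[of R P m] by (simp only: of_nat_le_iff)
  also have "\<dots> = (\<Sum>k\<le>m. real (cnt R k) * real (cnt P (m - k)))" by simp
  also have "\<dots> \<le> (\<Sum>k\<le>m. (c1 * a ^ k) * (c2 * b ^ (m - k)))"
  proof (rule sum_mono)
    fix k assume "k \<in> {..m}"
    show "real (cnt R k) * real (cnt P (m - k)) \<le> c1 * a ^ k * (c2 * b ^ (m - k))"
      by (rule mult_mono) (use assms in \<open>auto intro: mult_nonneg_nonneg\<close>)
  qed
  also have "\<dots> = (\<Sum>k\<le>m. c1 * c2 * a ^ m * (b / a) ^ (m - k))"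
  proof (rule sum.cong[OF refl])
    fix k assume "k \<in> {..m}"
    then have am: "a ^ m = a ^ k * a ^ (m - k)" by (simp add: power_add[symmetric])
    have e: "a ^ (m - k) * (b ^ (m - k) / a ^ (m - k)) = b ^ (m - k)" using a0 by simp
    have "c1 * c2 * a ^ m * (b / a) ^ (m - k) = c1 * c2 * a ^ k * (a ^ (m - k) * (b ^ (m - k) / a ^ (m - k)))"
      unfolding am power_divide by (simp only: mult.assoc)
    also have "\<dots> = c1 * a ^ k * (c2 * b ^ (m - k))" unfolding e by (simp only: mult_ac)
    finally show "c1 * a ^ k * (c2 * b ^ (m - k)) = c1 * c2 * a ^ m * (b / a) ^ (m - k)" by (rule sym)
  qed
  also have "\<dots> = c1 * c2 * a ^ m * (\<Sum>k\<le>m. (b / a) ^ (m - k))" by (simp add: sum_distrib_left)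
  also have "\<dots> \<le> c1 * c2 * a ^ m * (1 / (1 - b / a))"
    using geo_bound[OF r] assms a0 by (intro mult_left_mono) auto
  finally show "real (cnt (conc R P) m) \<le> c1 * c2 / (1 - b / a) * a ^ m" by simp
qed




lemma lpath_append:
  "lpath V E s u t \<Longrightarrow> lpath V E t w f \<Longrightarrow> lpath V E s (u @ w) f"
  by (induction rule: lpath.induct) (auto intro: lpath.intros)

lemma lpath_mono:
  "lpath V E s w t \<Longrightarrow> V \<subseteq> V' \<Longrightarrow> (\<And>x a y. E x a y \<Longrightarrow> E' x a y) \<Longrightarrow> lpath V' E' s w t"
proof (induction rule: lpath.induct)
  case (lpath_nil s) then show ?case by (auto intro: lpath.lpath_nil)
next
  case (lpath_cons s a s' w t) then show ?case by (meson lpath.lpath_cons)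
qed

locale AA =
  fixes bar :: "'a::finite \<Rightarrow> 'a" and \<kappa> :: nat
    and d1 :: "'q1::finite \<Rightarrow> 'a \<Rightarrow> 'q1" and q01 :: 'q1 and F1 :: "'q1 set"
    and d2 :: "'q2::finite \<Rightarrow> 'a \<Rightarrow> 'q2" and q02 :: 'q2 and F2 :: "'q2 set"
  assumes inv: "\<forall>a. bar (bar a) = a" and kpos: "\<kappa> > 0"
begin

abbreviation "V \<equiv> aut_states bar \<kappa> d1 q01 d2 q02"
abbreviation "E \<equiv> aut_arc bar \<kappa> d1 q01 F1 d2 q02 F2"
abbreviation "Ini \<equiv> aut_init bar \<kappa> d1 q01 d2 q02"
abbreviation "Fin \<equiv> aut_fin bar \<kappa> d1 q01 d2 q02"
abbreviation "U \<equiv> aut_useful bar \<kappa> d1 q01 F1 d2 q02 F2"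
abbreviation "TE \<equiv> taut_arc bar \<kappa> d1 q01 F1 d2 q02 F2"
abbreviation "M \<equiv> aut_M bar \<kappa> d1 q01 F1 d2 q02 F2"
abbreviation "R \<equiv> R_mu bar \<kappa> d1 q01 F1 d2 q02 F2"
abbreviation "BB \<equiv> B_mu bar d1 d2"
abbreviation "wb \<equiv> wbar bar"

lemma wb_append[simp]: "wb (u @ v) = wb v @ wb u" by (simp add: wbar_def)
lemma wb_Cons[simp]: "wb (a # u) = wb u @ [bar a]" by (simp add: wbar_def)
lemma wb_Nil[simp]: "wb [] = []" by (simp add: wbar_def)
lemma wb_wb[simp]: "wb (wb u) = u" using inv by (simp add: wbar_def rev_map comp_def)
lemma wb_len[simp]: "length (wb u) = length u" by (simp add: wbar_def)
lemma wb_inj: "inj wb" by (metis injI wb_wb)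

lemma arc_in: "E s a t \<Longrightarrow> s \<in> V \<and> t \<in> V"
  unfolding aut_arc_def by blast

lemma path_in: "lpath V E s w t \<Longrightarrow> s \<in> V \<and> t \<in> V"
  by (induction rule: lpath.induct) (auto dest: arc_in)

lemma path_sem:
  "lpath V E s w t \<Longrightarrow>
    fst t = (foldl d1 (fst (fst s)) w, foldl d2 (snd (fst s)) w) \<and>
    fst (snd s) = foldl d1 (fst (snd t)) (wb w) \<and>
    fst (snd (snd s)) = foldl d2 (fst (snd (snd t))) (wb w)"
proof (induction rule: lpath.induct)
  case (lpath_nil s) then show ?case by simp
next
  case (lpath_cons s a s' w t)
  from lpath_cons(1) obtain P q1 q2 l l' where
    s: "s = (P, d1 q1 (bar a), d2 q2 (bar a), l)" and
    s': "s' = ((d1 (fst P) a, d2 (snd P) a), q1, q2, l')"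
    unfolding aut_arc_def by blast
  show ?case using lpath_cons(3) s s' by simp
qed

lemma path_level:
  "lpath V E s w t \<Longrightarrow> snd (snd (snd s)) \<ge> 1 \<Longrightarrow> snd (snd (snd t)) = snd (snd (snd s)) + length w"
proof (induction rule: lpath.induct)
  case (lpath_nil s) then show ?case by simp
next
  case (lpath_cons s a s' w t)
  from lpath_cons(1) obtain P q1 q2 l l' where
    s: "s = (P, d1 q1 (bar a), d2 q2 (bar a), l)" and
    s': "s' = ((d1 (fst P) a, d2 (snd P) a), q1, q2, l')" and
    c: "(l = 0 \<and> l' = 0 \<and> d1 q1 (bar a) \<notin> F1 \<and> d2 q2 (bar a) \<notin> F2) \<or>
         (l = 0 \<and> l' = 1 \<and> (d1 q1 (bar a) \<in> F1 \<or> d2 q2 (bar a) \<in> F2)) \<or>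
         (1 \<le> l \<and> l < \<kappa> \<and> l' = l + 1)"
    unfolding aut_arc_def by blast
  have "l \<ge> 1" using lpath_cons(4) s by simp
  then have "l' = l + 1" using c by auto
  then show ?case using lpath_cons(3) s s' by simp
qed

lemma path_trigger:
  "lpath V E s w t \<Longrightarrow> snd (snd (snd s)) = 0 \<Longrightarrow>
    snd (snd (snd t)) = 0 \<or>
    (\<exists>y \<alpha>. w = y @ \<alpha> \<and> length \<alpha> = snd (snd (snd t)) \<and>
      (foldl d1 (fst (snd t)) (wb \<alpha>) \<in> F1 \<or> foldl d2 (fst (snd (snd t))) (wb \<alpha>) \<in> F2))"
proof (induction rule: lpath.induct)
  case (lpath_nil s) then show ?case by simp
next
  case (lpath_cons s a s' w t)
  from lpath_cons(1) obtain P q1 q2 l l' where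
    s: "s = (P, d1 q1 (bar a), d2 q2 (bar a), l)" and
    s': "s' = ((d1 (fst P) a, d2 (snd P) a), q1, q2, l')" and
    c: "(l = 0 \<and> l' = 0 \<and> d1 q1 (bar a) \<notin> F1 \<and> d2 q2 (bar a) \<notin> F2) \<or>
         (l = 0 \<and> l' = 1 \<and> (d1 q1 (bar a) \<in> F1 \<or> d2 q2 (bar a) \<in> F2)) \<or>
         (1 \<le> l \<and> l < \<kappa> \<and> l' = l + 1)"
    unfolding aut_arc_def by blast
  have l0: "l = 0" using lpath_cons(4) s by simp
  show ?case
  proof (cases "l' = 0")
    case True
    then have "snd (snd (snd s')) = 0" using s' by simp
    from lpath_cons(3)[OF this] show ?thesis
    proof
      assume "\<exists>y \<alpha>. w = y @ \<alpha> \<and> length \<alpha> = snd (snd (snd t)) \<and>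
        (foldl d1 (fst (snd t)) (wb \<alpha>) \<in> F1 \<or> foldl d2 (fst (snd (snd t))) (wb \<alpha>) \<in> F2)"
      then obtain y \<alpha> where "w = y @ \<alpha>" "length \<alpha> = snd (snd (snd t))"
        "foldl d1 (fst (snd t)) (wb \<alpha>) \<in> F1 \<or> foldl d2 (fst (snd (snd t))) (wb \<alpha>) \<in> F2" by blast
      then show ?thesis by (intro disjI2 exI[of _ "a # y"] exI[of _ \<alpha>]) auto
    qed simp
  next
    case False
    then have l1: "l' = 1" and trig: "d1 q1 (bar a) \<in> F1 \<or> d2 q2 (bar a) \<in> F2" using c l0 by auto
    have lev: "snd (snd (snd t)) = 1 + length w" using path_level[OF lpath_cons(2)] s' l1 by simp
    have sem: "q1 = foldl d1 (fst (snd t)) (wb w)" "q2 = foldl d2 (fst (snd (snd t))) (wb w)"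
      using path_sem[OF lpath_cons(2)] s' by auto
    show ?thesis
      by (intro disjI2 exI[of _ "[]"] exI[of _ "a # w"]) (use lev sem trig in auto)
  qed
qed

lemma to_trim:
  assumes "lpath V E s w t" "i \<in> Ini" "lpath V E i w0 s" "f \<in> Fin" "lpath V E t w1 f"
  shows "lpath U TE s w t"
  using assms
proof (induction arbitrary: w0 rule: lpath.induct)
  case (lpath_nil s)
  then have "s \<in> U" unfolding aut_useful_def by blast
  then show ?case by (rule lpath.intros)
next
  case (lpath_cons s a s' w t)
  have sV: "s \<in> V" and s'V: "s' \<in> V" using arc_in[OF lpath_cons(1)] by auto
  have p1: "lpath V E s (a # w) t" using lpath_cons(1,2) by (rule lpath.intros)
  have "lpath V E s ((a # w) @ w1) f" by (rule lpath_append[OF p1 lpath_cons(7)])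
  then have sU: "s \<in> U" unfolding aut_useful_def using sV lpath_cons(4,5,6) by blast
  have "lpath V E s [a] s'" using lpath_cons(1) s'V by (auto intro: lpath.intros)
  then have r': "lpath V E i (w0 @ [a]) s'" by (rule lpath_append[OF lpath_cons(5)])
  have "lpath V E s' (w @ w1) f" by (rule lpath_append[OF lpath_cons(2) lpath_cons(7)])
  then have s'U: "s' \<in> U" unfolding aut_useful_def using s'V r' lpath_cons(4,6) by blast
  have "TE s a s'" unfolding taut_arc_def using lpath_cons(1) sU s'U by blast
  moreover have "lpath U TE s' w t" using lpath_cons(3)[OF lpath_cons(4) r' lpath_cons(6,7)] .
  ultimately show ?case by (rule lpath.intros)
qed

lemma trim_in: "lpath U TE s w t \<Longrightarrow> s \<in> U \<and> t \<in> U"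
  by (induction rule: lpath.induct) (auto simp: taut_arc_def)

lemma trim_untrim: "lpath U TE s w t \<Longrightarrow> lpath V E s w t"
  by (erule lpath_mono) (auto simp: aut_useful_def taut_arc_def)


lemma aut_exists:
  assumes kx: "\<kappa> \<le> length x"
    and trig0: "foldl d1 (foldl d1 q01 (x @ v)) (wb (drop (length x - \<kappa>) x)) \<in> F1 \<or>
                foldl d2 (foldl d2 q02 (x @ wb v)) (wb (drop (length x - \<kappa>) x)) \<in> F2"
  shows "\<exists>\<mu>\<in>M. \<exists>x' y. x' \<in> R \<mu> \<and> x = x' @ y \<and> y @ v @ wb y \<in> BB \<mu>"
proof -
  define e1 where "e1 = foldl d1 q01 (x @ v)"
  define e2 where "e2 = foldl d2 q02 (x @ wb v)"
  define r where "r j = foldl d1 e1 (wb (drop j x))" for j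
  define tt where "tt j = foldl d2 e2 (wb (drop j x))" for j
  define trig where "trig j \<longleftrightarrow> r j \<in> F1 \<or> tt j \<in> F2" for j
  define j0 where "j0 = (LEAST j. trig j)"
  have tn: "trig (length x - \<kappa>)" using trig0 unfolding trig_def r_def tt_def e1_def e2_def .
  have tj0: "trig j0" unfolding j0_def by (rule LeastI[of trig, OF tn])
  have j0le: "j0 \<le> length x - \<kappa>" unfolding j0_def by (rule Least_le[of trig, OF tn])
  have ntr: "\<not> trig i" if "i < j0" for i using that unfolding j0_def by (rule not_less_Least[of _ trig])
  define N where "N = j0 + \<kappa>"
  have NL: "N \<le> length x" using j0le kx unfolding N_def by linarith
  define st where "st i = ((foldl d1 q01 (take i x), foldl d2 q02 (take i x)), r i, tt i, i - j0)" for i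
  have bridge: "drop i x @ v @ wb (drop i x) \<in>
      Bset bar d1 d2 (foldl d1 q01 (take i x)) (foldl d2 q02 (take i x)) (r i) (tt i)" for i
  proof -
    have x1: "foldl d1 q01 x = foldl d1 (foldl d1 q01 (take i x)) (drop i x)"
      by (metis append_take_drop_id foldl_append)
    have x2: "foldl d2 q02 x = foldl d2 (foldl d2 q02 (take i x)) (drop i x)"
      by (metis append_take_drop_id foldl_append)
    show ?thesis unfolding Bset_def r_def tt_def e1_def e2_def using x1 x2 by simp
  qed
  have stV: "st i \<in> V" if "i \<le> N" for i
  proof -
    have "fst (st i) \<in> Q12 d1 q01 d2 q02" unfolding Q12_def st_def by auto
    moreover have "i - j0 \<le> \<kappa>" using that unfolding N_def by linarith
    moreover have "Bset bar d1 d2 (foldl d1 q01 (take i x)) (foldl d2 q02 (take i x)) (r i) (tt i) \<noteq> {}"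
      using bridge[of i] by blast
    ultimately show ?thesis unfolding aut_states_def st_def by simp
  qed
  have arc: "E (st i) (x ! i) (st (Suc i))" if iN: "i < N" for i
  proof -
    have il: "i < length x" using iN NL by linarith
    have dr: "drop i x = x ! i # drop (Suc i) x" using il by (rule Cons_nth_drop_Suc[symmetric])
    have tk: "take (Suc i) x = take i x @ [x ! i]" using il by (rule take_Suc_conv_app_nth)
    have ri: "r i = d1 (r (Suc i)) (bar (x ! i))" unfolding r_def dr by simp
    have ti: "tt i = d2 (tt (Suc i)) (bar (x ! i))" unfolding tt_def dr by simp
    have cond: "(i - j0 = 0 \<and> Suc i - j0 = 0 \<and> r i \<notin> F1 \<and> tt i \<notin> F2) \<or>
        (i - j0 = 0 \<and> Suc i - j0 = 1 \<and> (r i \<in> F1 \<or> tt i \<in> F2)) \<or>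
        (1 \<le> i - j0 \<and> i - j0 < \<kappa> \<and> Suc i - j0 = i - j0 + 1)"
    proof (cases "i < j0")
      case True then show ?thesis using ntr[OF True] unfolding trig_def by auto
    next
      case False
      show ?thesis
      proof (cases "i = j0")
        case True then show ?thesis using tj0 unfolding trig_def by auto
      next
        case False2: False
        then show ?thesis using \<open>\<not> i < j0\<close> iN unfolding N_def by auto
      qed
    qed
    have s1: "st i \<in> V" "st (Suc i) \<in> V" using stV iN by auto
    have "\<exists>P q1 q2 l l'.
        st i = (P, d1 q1 (bar (x ! i)), d2 q2 (bar (x ! i)), l) \<and>
        st (Suc i) = ((d1 (fst P) (x ! i), d2 (snd P) (x ! i)), q1, q2, l') \<and>
        ((l = 0 \<and> l' = 0 \<and> d1 q1 (bar (x ! i)) \<notin> F1 \<and> d2 q2 (bar (x ! i)) \<notin> F2) \<or>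
         (l = 0 \<and> l' = 1 \<and> (d1 q1 (bar (x ! i)) \<in> F1 \<or> d2 q2 (bar (x ! i)) \<in> F2)) \<or>
         (1 \<le> l \<and> l < \<kappa> \<and> l' = l + 1))"
      apply (rule exI[of _ "fst (st i)"], rule exI[of _ "r (Suc i)"], rule exI[of _ "tt (Suc i)"],
             rule exI[of _ "i - j0"], rule exI[of _ "Suc i - j0"])
      using cond unfolding st_def tk ri[symmetric] ti[symmetric] by simp
    then show ?thesis unfolding aut_arc_def using s1 by blast
  qed
  have pth: "lpath V E (st i) (drop i (take N x)) (st N)" if "i \<le> N" for i
    using that
  proof (induction rule: inc_induct)
    case base
    show ?case using stV[of N] by (simp add: lpath.lpath_nil)
  next
    case (step n)
    have "n < length (take N x)" using step(2) NL by simp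
    then have "drop n (take N x) = take N x ! n # drop (Suc n) (take N x)"
      by (rule Cons_nth_drop_Suc[symmetric])
    moreover have "take N x ! n = x ! n" using step(2) by simp
    ultimately show ?case using lpath.lpath_cons[OF arc[OF step(2)] step(3)] by simp
  qed
  have p0: "lpath V E (st 0) (take N x) (st N)" using pth[of 0] by simp
  have s0I: "st 0 \<in> Ini" unfolding aut_init_def using stV[of 0] by (simp add: st_def)
  have sNF: "st N \<in> Fin" unfolding aut_fin_def using stV[of N] by (simp add: st_def N_def)
  have pt: "lpath U TE (st 0) (take N x) (st N)"
    by (rule to_trim[OF p0 s0I _ sNF]) (use stV in \<open>auto intro: lpath.lpath_nil\<close>)
  have mu: "(st 0, st N) \<in> M" unfolding aut_M_def using trim_in[OF pt] s0I sNF by blast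
  have xr: "take N x \<in> R (st 0, st N)" unfolding R_mu_def using pt by simp
  have yb: "drop N x @ v @ wb (drop N x) \<in> BB (st 0, st N)"
    unfolding B_mu_def using bridge[of N] by (simp add: st_def)
  show ?thesis using mu xr yb by (intro bexI[of _ "(st 0, st N)"] exI[of _ "take N x"] exI[of _ "drop N x"]) auto
qed

lemma finite_V: "finite V"
proof (rule finite_subset)
  show "V \<subseteq> (UNIV :: ('q1 \<times> 'q2) set) \<times> (UNIV :: 'q1 set) \<times> (UNIV :: 'q2 set) \<times> {..\<kappa>}"
    unfolding aut_states_def by auto
  show "finite ((UNIV :: ('q1 \<times> 'q2) set) \<times> (UNIV :: 'q1 set) \<times> (UNIV :: 'q2 set) \<times> {..\<kappa>})" by simp
qed

lemma finite_M: "finite M"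
proof (rule finite_subset)
  show "M \<subseteq> V \<times> V" unfolding aut_M_def aut_init_def aut_fin_def by auto
  show "finite (V \<times> V)" using finite_V by simp
qed

end



lemma cnt_two:
  fixes X L1 L2 :: "('b::finite) list set"
  assumes "\<forall>w\<in>X. length w = m \<longrightarrow> (f w \<in> L1 \<and> length (f w) = n) \<or> (g w \<in> L2 \<and> length (g w) = n)"
    and "inj_on f {w. length w = m}" and "inj_on g {w. length w = m}"
  shows "cnt X m \<le> cnt L1 n + cnt L2 n"
proof -
  let ?A = "{w\<in>X. length w = m \<and> f w \<in> L1 \<and> length (f w) = n}"
  let ?B = "{w\<in>X. length w = m \<and> g w \<in> L2 \<and> length (g w) = n}"
  have fA: "finite ?A" by (rule finite_subset[OF _ finite_len[of m]]) auto
  have fB: "finite ?B" by (rule finite_subset[OF _ finite_len[of m]]) auto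
  have "{w\<in>X. length w = m} \<subseteq> ?A \<union> ?B" using assms(1) by auto
  then have "cnt X m \<le> card (?A \<union> ?B)" unfolding cnt_def by (intro card_mono) (use fA fB in auto)
  also have "\<dots> \<le> card ?A + card ?B" by (rule card_Un_le)
  also have "card ?A \<le> cnt L1 n" unfolding cnt_def
  proof (rule card_inj_on_le)
    show "inj_on f ?A" by (rule inj_on_subset[OF assms(2)]) auto
    show "f ` ?A \<subseteq> {w\<in>L1. length w = n}" by auto
    show "finite {w\<in>L1. length w = n}" by (rule finite_lenL)
  qed
  also have "card ?B \<le> cnt L2 n" unfolding cnt_def
  proof (rule card_inj_on_le)
    show "inj_on g ?B" by (rule inj_on_subset[OF assms(3)]) auto
    show "g ` ?B \<subseteq> {w\<in>L2. length w = n}" by auto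
    show "finite {w\<in>L2. length w = n}" by (rule finite_lenL)
  qed
  finally show ?thesis by simp
qed

lemma growth_cong: "(\<And>m. cnt A m = cnt B m) \<Longrightarrow> growth A = growth B"
  unfolding growth_def cnt_def by simp

lemma keyK:
  fixes key :: "'b \<Rightarrow> 'k::finite" and Q :: "'k \<Rightarrow> 'c list \<Rightarrow> bool"
  shows "\<exists>K. \<forall>u. (\<exists>t. Q (key u) t) \<longrightarrow> (\<exists>t. length t \<le> K \<and> Q (key u) t)"
proof -
  define h where "h k = (if \<exists>t. Q k t then length (SOME t. Q k t) else 0)" for k
  show ?thesis
  proof (intro exI[of _ "Max (range h)"] allI impI)
    fix u assume ex: "\<exists>t. Q (key u) t"
    then have q: "Q (key u) (SOME t. Q (key u) t)" by (rule someI_ex)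
    have le: "h (key u) \<le> Max (range h)" by (rule Max_ge) auto
    have hk: "h (key u) = length (SOME t. Q (key u) t)" unfolding h_def using ex by simp
    show "\<exists>t. length t \<le> Max (range h) \<and> Q (key u) t"
      by (rule exI[of _ "SOME t. Q (key u) t"]) (use q hk le in auto)
  qed
qed

lemma cnt_Un: "cnt (A \<union> B) m \<le> cnt A m + cnt (B :: ('b::finite) list set) m"
proof -
  have "{w\<in>A \<union> B. length w = m} = {w\<in>A. length w = m} \<union> {w\<in>B. length w = m}" by auto
  then show ?thesis unfolding cnt_def by (simp add: card_Un_le)
qed

lemma growth_UN:
  fixes X :: "'i \<Rightarrow> ('b::finite) list set"
  assumes "finite I" "a \<ge> 0" "\<forall>i\<in>I. \<exists>c>0. \<forall>m. real (cnt (X i) m) \<le> c * a ^ m"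
  shows "\<exists>c>0. \<forall>m. real (cnt (\<Union>i\<in>I. X i) m) \<le> c * a ^ m"
  using assms(1,3)
proof (induction I rule: finite_induct)
  case empty
  show ?case by (intro exI[of _ 1]) (auto simp: cnt_def assms(2))
next
  case (insert i I)
  obtain c1 where c1: "c1 > 0" "\<forall>m. real (cnt (X i) m) \<le> c1 * a ^ m" using insert(4) by auto
  obtain c2 where c2: "c2 > 0" "\<forall>m. real (cnt (\<Union>i\<in>I. X i) m) \<le> c2 * a ^ m" using insert(3,4) by auto
  show ?case
  proof (intro exI[of _ "c1 + c2"] conjI allI)
    show "0 < c1 + c2" using c1 c2 by simp
    fix m
    have "real (cnt (\<Union>i\<in>insert i I. X i) m) \<le> real (cnt (X i) m) + real (cnt (\<Union>i\<in>I. X i) m)"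
      using cnt_Un[of "X i" "\<Union>i\<in>I. X i" m] by simp
    also have "\<dots> \<le> c1 * a ^ m + c2 * a ^ m" using c1 c2 by (meson add_mono)
    finally show "real (cnt (\<Union>i\<in>insert i I. X i) m) \<le> (c1 + c2) * a ^ m" by (simp add: algebra_simps)
  qed
qed

lemma cnt_split:
  fixes L C :: "('b::finite) list set"
  assumes "\<forall>z\<in>L. length z = n \<longrightarrow> take (n - k) z \<in> C" "k \<le> n"
  shows "cnt L n \<le> cnt C (n - k) * card (UNIV::'b set) ^ k"
proof -
  let ?f = "\<lambda>z. (take (n - k) z, drop (n - k) z)"
  have "cnt L n \<le> card ({w\<in>C. length w = n - k} \<times> {w::'b list. length w = k})"
    unfolding cnt_def
  proof (rule card_inj_on_le[where f = ?f])
    show "inj_on ?f {w\<in>L. length w = n}" by (rule inj_onI) (metis append_take_drop_id prod.inject)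
    show "?f ` {w\<in>L. length w = n} \<subseteq> {w\<in>C. length w = n - k} \<times> {w::'b list. length w = k}"
      using assms by auto
    show "finite ({w\<in>C. length w = n - k} \<times> {w::'b list. length w = k})"
      by (intro finite_cartesian_product finite_lenL finite_len)
  qed
  also have "\<dots> = cnt C (n - k) * card (UNIV::'b set) ^ k"
    unfolding card_cartesian_product cnt_def card_len ..
  finally show ?thesis .
qed

lemma growth_from_split:
  fixes L C :: "('b::finite) list set"
  assumes g0: "g \<ge> 0" and cb: "\<And>e. e > 0 \<Longrightarrow> \<exists>c>0. \<forall>m. real (cnt C m) \<le> c * (g + e) ^ m"
    and sp: "\<forall>n. k \<le> n \<longrightarrow> cnt L n \<le> cnt C (n - k) * card (UNIV::'b set) ^ k"
    and sm: "\<forall>n<k. cnt L n = 0"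
  shows "growth L \<le> g"
proof (rule growth_le[OF g0])
  fix e :: real assume e: "e > 0"
  obtain c where c: "c > 0" "\<forall>m. real (cnt C m) \<le> c * (g + e) ^ m" using cb[OF e] by blast
  let ?a = "g + e"
  let ?N = "real (card (UNIV::'b set))"
  have a0: "?a > 0" using g0 e by simp
  have N0: "?N > 0" by (simp add: card_gt_0_iff)
  show "\<exists>c>0. \<forall>m. real (cnt L m) \<le> c * (g + e) ^ m"
  proof (intro exI[of _ "c * ?N ^ k / ?a ^ k"] conjI allI)
    show "0 < c * ?N ^ k / ?a ^ k" using c a0 N0 by simp
    fix n
    show "real (cnt L n) \<le> c * ?N ^ k / ?a ^ k * ?a ^ n"
    proof (cases "k \<le> n")
      case False
      then show ?thesis using sm c a0 N0 by simp
    next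
      case True
      have an: "?a ^ n = ?a ^ (n - k) * ?a ^ k" using True by (simp add: power_add[symmetric])
      have "real (cnt L n) \<le> real (cnt C (n - k)) * ?N ^ k"
        using sp True by (metis of_nat_le_iff of_nat_mult of_nat_power)
      also have "\<dots> \<le> c * ?a ^ (n - k) * ?N ^ k" using c(2) by (intro mult_right_mono) auto
      also have "\<dots> = c * ?N ^ k / ?a ^ k * ?a ^ n" unfolding an using a0 by (simp add: field_simps)
      finally show ?thesis .
    qed
  qed
qed

context AA
begin

lemma wb_img: "z \<in> wb ` A \<longleftrightarrow> wb z \<in> A"
proof
  assume "z \<in> wb ` A"
  then obtain a where "a \<in> A" "z = wb a" by blast
  then show "wb z \<in> A" by simp
next
  assume "wb z \<in> A"
  then show "z \<in> wb ` A" using image_eqI[of z wb "wb z" A] by simp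
qed

lemma cnt_wb: "cnt (wb ` A) m = cnt A m"
proof -
  have "{w\<in>wb ` A. length w = m} = wb ` {w\<in>A. length w = m}" by (auto simp: wb_img)
  then show ?thesis unfolding cnt_def by (simp add: card_image inj_on_subset[OF wb_inj])
qed

lemma bset_K1: "\<exists>K. \<forall>u. (\<exists>t. u @ t \<in> Bset bar d1 d2 p1 p2 e1 e2) \<longrightarrow>
    (\<exists>t. length t \<le> K \<and> u @ t \<in> Bset bar d1 d2 p1 p2 e1 e2)"
proof -
  define key where "key u = (foldl d1 p1 u, \<lambda>q. foldl d2 q (wb u))" for u
  define Q where "Q k t \<longleftrightarrow> foldl d1 (fst k) t = e1 \<and> snd k (foldl d2 p2 (wb t)) = e2" for k :: "'q1 \<times> ('q2 \<Rightarrow> 'q2)" and t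
  have eq: "u @ t \<in> Bset bar d1 d2 p1 p2 e1 e2 \<longleftrightarrow> Q (key u) t" for u t
    unfolding Bset_def Q_def key_def by simp
  obtain K where "\<forall>u. (\<exists>t. Q (key u) t) \<longrightarrow> (\<exists>t. length t \<le> K \<and> Q (key u) t)" using keyK[of Q key] by blast
  then show ?thesis unfolding eq by blast
qed

lemma bset_K2: "\<exists>K. \<forall>u. (\<exists>t. u @ t \<in> wb ` Bset bar d1 d2 p1 p2 e1 e2) \<longrightarrow>
    (\<exists>t. length t \<le> K \<and> u @ t \<in> wb ` Bset bar d1 d2 p1 p2 e1 e2)"
proof -
  define key where "key u = (\<lambda>q. foldl d1 q (wb u), foldl d2 p2 u)" for u
  define Q where "Q k t \<longleftrightarrow> fst k (foldl d1 p1 (wb t)) = e1 \<and> foldl d2 (snd k) t = e2" for k :: "('q1 \<Rightarrow> 'q1) \<times> 'q2" and t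
  have eq: "u @ t \<in> wb ` Bset bar d1 d2 p1 p2 e1 e2 \<longleftrightarrow> Q (key u) t" for u t
    unfolding wb_img Bset_def Q_def key_def by simp
  obtain K where "\<forall>u. (\<exists>t. Q (key u) t) \<longrightarrow> (\<exists>t. length t \<le> K \<and> Q (key u) t)" using keyK[of Q key] by blast
  then show ?thesis unfolding eq by blast
qed

lemma BB_cases: obtains p1 p2 e1 e2 where "BB \<mu> = Bset bar d1 d2 p1 p2 e1 e2"
proof -
  have "BB \<mu> = Bset bar d1 d2 (fst (fst (snd \<mu>))) (snd (fst (snd \<mu>))) (fst (snd (snd \<mu>))) (fst (snd (snd (snd \<mu>))))"
    by (simp add: B_mu_def split: prod.split)
  then show ?thesis by (rule that)
qed

lemma BB_K1: "\<exists>K. \<forall>u\<in>{u. \<exists>t. u @ t \<in> BB \<mu>}. \<exists>t. length t \<le> K \<and> u @ t \<in> BB \<mu>"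
proof -
  obtain p1 p2 e1 e2 where "BB \<mu> = Bset bar d1 d2 p1 p2 e1 e2" by (rule BB_cases)
  then show ?thesis using bset_K1[of p1 p2 e1 e2] by simp
qed

lemma BB_K2: "\<exists>K. \<forall>u\<in>{u. \<exists>t. u @ t \<in> wb ` BB \<mu>}. \<exists>t. length t \<le> K \<and> u @ t \<in> wb ` BB \<mu>"
proof -
  obtain p1 p2 e1 e2 where "BB \<mu> = Bset bar d1 d2 p1 p2 e1 e2" by (rule BB_cases)
  then show ?thesis using bset_K2[of p1 p2 e1 e2] by simp
qed

lemma B_le:
  assumes L1: "L1 = dfa_lang d1 q01 F1" and L2: "wb ` L2 = dfa_lang d2 q02 F2" and mu: "\<mu> \<in> M"
  shows "growth (BB \<mu>) \<le> max (growth L1) (growth L2)"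
proof -
  obtain I F where mu': "\<mu> = (I, F)" by (cases \<mu>)
  have FU: "F \<in> U" and FF: "F \<in> Fin" using mu mu' unfolding aut_M_def by auto
  from FU obtain i x0 where i: "i \<in> Ini" and p: "lpath V E i x0 F" unfolding aut_useful_def by blast
  obtain P e1 e2 l where Fe: "F = (P, e1, e2, l)" using prod_cases4 by blast
  have lk: "l = \<kappa>" using FF Fe unfolding aut_fin_def by simp
  obtain a1 a2 where ie: "i = ((q01, q02), a1, a2, 0)" using i unfolding aut_init_def by blast
  have P: "P = (foldl d1 q01 x0, foldl d2 q02 x0)" using path_sem[OF p] ie Fe by simp
  from path_trigger[OF p] obtain y \<alpha> where dec: "x0 = y @ \<alpha>" "length \<alpha> = \<kappa>"
    and tr: "foldl d1 e1 (wb \<alpha>) \<in> F1 \<or> foldl d2 e2 (wb \<alpha>) \<in> F2"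
    using ie Fe lk kpos by auto
  have BBeq: "BB \<mu> = Bset bar d1 d2 (foldl d1 q01 x0) (foldl d2 q02 x0) e1 e2"
    using mu' Fe P by (simp add: B_mu_def)
  show ?thesis
  proof (rule growth_transfer[where c = "length x0 + \<kappa>"], rule allI)
    fix m
    show "cnt (BB \<mu>) m \<le> cnt L1 (m + (length x0 + \<kappa>)) + cnt L2 (m + (length x0 + \<kappa>))"
    proof (rule cnt_two[where f = "\<lambda>w. x0 @ w @ wb \<alpha>" and g = "\<lambda>w. \<alpha> @ w @ wb x0"])
      show "\<forall>w\<in>BB \<mu>. length w = m \<longrightarrow>
          (x0 @ w @ wb \<alpha> \<in> L1 \<and> length (x0 @ w @ wb \<alpha>) = m + (length x0 + \<kappa>)) \<or>
          (\<alpha> @ w @ wb x0 \<in> L2 \<and> length (\<alpha> @ w @ wb x0) = m + (length x0 + \<kappa>))"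
      proof (intro ballI impI)
        fix w assume w: "w \<in> BB \<mu>" "length w = m"
        then have w1: "foldl d1 (foldl d1 q01 x0) w = e1" and w2: "foldl d2 (foldl d2 q02 x0) (wb w) = e2"
          unfolding BBeq Bset_def by auto
        from tr show "(x0 @ w @ wb \<alpha> \<in> L1 \<and> length (x0 @ w @ wb \<alpha>) = m + (length x0 + \<kappa>)) \<or>
          (\<alpha> @ w @ wb x0 \<in> L2 \<and> length (\<alpha> @ w @ wb x0) = m + (length x0 + \<kappa>))"
        proof
          assume "foldl d1 e1 (wb \<alpha>) \<in> F1"
          then have "x0 @ w @ wb \<alpha> \<in> L1" unfolding L1 dfa_lang_def using w1 by simp
          then show ?thesis using w dec by auto
        next
          assume "foldl d2 e2 (wb \<alpha>) \<in> F2"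
          then have "x0 @ wb w @ wb \<alpha> \<in> wb ` L2" unfolding L2 dfa_lang_def using w2 by simp
          then have "\<alpha> @ w @ wb x0 \<in> L2" unfolding wb_img by simp
          then show ?thesis using w dec by auto
        qed
      qed
      show "inj_on (\<lambda>w. x0 @ w @ wb \<alpha>) {w. length w = m}" by (rule inj_onI) simp
      show "inj_on (\<lambda>w. \<alpha> @ w @ wb x0) {w. length w = m}" by (rule inj_onI) simp
    qed
  qed
qed

lemma R_le:
  assumes L1: "L1 = dfa_lang d1 q01 F1" and L2: "wb ` L2 = dfa_lang d2 q02 F2" and mu: "\<mu> \<in> M"
  shows "growth (R \<mu>) \<le> max (growth L1) (growth L2)"
proof -
  obtain I F where mu': "\<mu> = (I, F)" by (cases \<mu>)
  have II: "I \<in> Ini" and FF: "F \<in> Fin" using mu mu' unfolding aut_M_def by auto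
  obtain P e1 e2 l where Fe: "F = (P, e1, e2, l)" using prod_cases4 by blast
  have lk: "l = \<kappa>" using FF Fe unfolding aut_fin_def by simp
  obtain a1 a2 where ie: "I = ((q01, q02), a1, a2, 0)" using II unfolding aut_init_def by blast
  have FV: "F \<in> V" using FF unfolding aut_fin_def by blast
  then obtain w0 where w0: "w0 \<in> Bset bar d1 d2 (fst P) (snd P) e1 e2" unfolding aut_states_def Fe by auto
  have w01: "foldl d1 (fst P) w0 = e1" and w02: "foldl d2 (snd P) (wb w0) = e2"
    using w0 unfolding Bset_def by auto
  show ?thesis
  proof (rule growth_transfer[where c = "length w0 + \<kappa>"], rule allI)
    fix m
    show "cnt (R \<mu>) m \<le> cnt L1 (m + (length w0 + \<kappa>)) + cnt L2 (m + (length w0 + \<kappa>))"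
    proof (rule cnt_two[where f = "\<lambda>x. x @ w0 @ wb (drop (length x - \<kappa>) x)"
                         and g = "\<lambda>x. drop (length x - \<kappa>) x @ w0 @ wb x"])
      show "\<forall>x\<in>R \<mu>. length x = m \<longrightarrow>
          (x @ w0 @ wb (drop (length x - \<kappa>) x) \<in> L1 \<and>
            length (x @ w0 @ wb (drop (length x - \<kappa>) x)) = m + (length w0 + \<kappa>)) \<or>
          (drop (length x - \<kappa>) x @ w0 @ wb x \<in> L2 \<and>
            length (drop (length x - \<kappa>) x @ w0 @ wb x) = m + (length w0 + \<kappa>))"
      proof (intro ballI impI)
        fix x assume x: "x \<in> R \<mu>" "length x = m"
        have pt: "lpath V E I x F" using x(1) mu' unfolding R_mu_def by (auto intro: trim_untrim)
        have P: "P = (foldl d1 q01 x, foldl d2 q02 x)" using path_sem[OF pt] ie Fe by simp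
        from path_trigger[OF pt] obtain y \<alpha> where dec: "x = y @ \<alpha>" "length \<alpha> = \<kappa>"
          and tr: "foldl d1 e1 (wb \<alpha>) \<in> F1 \<or> foldl d2 e2 (wb \<alpha>) \<in> F2"
          using ie Fe lk kpos by auto
        have dr: "drop (length x - \<kappa>) x = \<alpha>" using dec by simp
        from tr show "(x @ w0 @ wb (drop (length x - \<kappa>) x) \<in> L1 \<and>
            length (x @ w0 @ wb (drop (length x - \<kappa>) x)) = m + (length w0 + \<kappa>)) \<or>
          (drop (length x - \<kappa>) x @ w0 @ wb x \<in> L2 \<and>
            length (drop (length x - \<kappa>) x @ w0 @ wb x) = m + (length w0 + \<kappa>))"
        proof
          assume "foldl d1 e1 (wb \<alpha>) \<in> F1"
          then have "x @ w0 @ wb \<alpha> \<in> L1" unfolding L1 dfa_lang_def using w01 P by simp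
          then show ?thesis using x dec dr by auto
        next
          assume "foldl d2 e2 (wb \<alpha>) \<in> F2"
          then have "x @ wb w0 @ wb \<alpha> \<in> wb ` L2" unfolding L2 dfa_lang_def using w02 P by simp
          then have "\<alpha> @ w0 @ wb x \<in> L2" unfolding wb_img by simp
          then show ?thesis using x dec dr by auto
        qed
      qed
      show "inj_on (\<lambda>x. x @ w0 @ wb (drop (length x - \<kappa>) x)) {w. length w = m}"
        by (rule inj_onI) simp
      show "inj_on (\<lambda>x. drop (length x - \<kappa>) x @ w0 @ wb x) {w. length w = m}"
      proof (rule inj_onI)
        fix x x' assume a: "x \<in> {w. length w = m}" "x' \<in> {w. length w = m}"
          "drop (length x - \<kappa>) x @ w0 @ wb x = drop (length x' - \<kappa>) x' @ w0 @ wb x'"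
        have "length (drop (length x - \<kappa>) x) = length (drop (length x' - \<kappa>) x')" using a by simp
        then have "wb x = wb x'" using a(3) by simp
        then show "x = x'" by (metis wb_wb)
      qed
    qed
  qed
qed


lemma main_AA:
  assumes L1: "L1 = dfa_lang d1 q01 F1" and L2: "wb ` L2 = dfa_lang d2 q02 F2"
    and h1: "\<forall>w \<in> L1. \<exists>\<alpha> u v. length \<alpha> = \<kappa> \<and> w = u @ \<alpha> @ v @ wbar bar \<alpha>"
    and h2: "\<forall>w \<in> L2. \<exists>\<alpha> u v. length \<alpha> = \<kappa> \<and> w = \<alpha> @ v @ wbar bar \<alpha> @ u"
  shows "max (growth L1) (growth L2) =
         max (sigma_max bar \<kappa> d1 q01 F1 d2 q02 F2) (rho_max bar \<kappa> d1 q01 F1 d2 q02 F2)"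
proof -
  let ?s = "sigma_max bar \<kappa> d1 q01 F1 d2 q02 F2"
  let ?r = "rho_max bar \<kappa> d1 q01 F1 d2 q02 F2"
  let ?lam = "max (growth L1) (growth L2)"
  have finM: "finite M" by (rule finite_M)
  have lam0: "0 \<le> ?lam" using growth_nonneg[of L1] by simp
  have s_le: "?s \<le> ?lam" unfolding sigma_max_def
    using finM B_le[OF L1 L2] lam0 by (intro Max.boundedI) auto
  have r_le: "?r \<le> ?lam" unfolding rho_max_def
    using finM R_le[OF L1 L2] lam0 by (intro Max.boundedI) auto
  define g where "g = max ?s ?r"
  have s0: "0 \<le> ?s" unfolding sigma_max_def using finM by (intro Max_ge) auto
  have g0: "0 \<le> g" unfolding g_def using s0 by simp
  have gB: "growth (BB \<mu>) \<le> g" if mu: "\<mu> \<in> M" for \<mu>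
  proof -
    have "growth (BB \<mu>) \<le> ?s" unfolding sigma_max_def using finM mu by (intro Max_ge) auto
    then show ?thesis unfolding g_def by simp
  qed
  have gR: "growth (R \<mu>) \<le> g" if mu: "\<mu> \<in> M" for \<mu>
  proof -
    have "growth (R \<mu>) \<le> ?r" unfolding rho_max_def using finM mu by (intro Max_ge) auto
    then show ?thesis unfolding g_def by simp
  qed
  define P1 where "P1 \<mu> = {u. \<exists>t. u @ t \<in> BB \<mu>}" for \<mu>
  define P2 where "P2 \<mu> = {u. \<exists>t. u @ t \<in> wb ` BB \<mu>}" for \<mu>
  define C1 where "C1 = (\<Union>\<mu>\<in>M. conc (R \<mu>) (P1 \<mu>))"
  define C2 where "C2 = (\<Union>\<mu>\<in>M. conc (R \<mu>) (P2 \<mu>))"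
  have cb1: "\<exists>c>0. \<forall>m. real (cnt C1 m) \<le> c * (g + e) ^ m" if e: "e > 0" for e
    unfolding C1_def
  proof (rule growth_UN[OF finM])
    show "0 \<le> g + e" using g0 e by simp
    show "\<forall>\<mu>\<in>M. \<exists>c>0. \<forall>m. real (cnt (conc (R \<mu>) (P1 \<mu>)) m) \<le> c * (g + e) ^ m"
    proof
      fix \<mu> assume mu: "\<mu> \<in> M"
      have "growth (R \<mu>) < g + e" using gR[OF mu] e by linarith
      then obtain c1 where c1: "c1 > 0" "\<forall>k. real (cnt (R \<mu>) k) \<le> c1 * (g + e) ^ k"
        using growth_bound by blast
      obtain K where K: "\<forall>u\<in>P1 \<mu>. \<exists>t. length t \<le> K \<and> u @ t \<in> BB \<mu>"
        using BB_K1[of \<mu>] unfolding P1_def by blast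
      have "growth (BB \<mu>) < g + e / 2" using gB[OF mu] e by linarith
      then obtain c2 where c2: "c2 > 0" "\<forall>k. real (cnt (P1 \<mu>) k) \<le> c2 * (g + e / 2) ^ k"
        using growth_pref[OF K] by blast
      show "\<exists>c>0. \<forall>m. real (cnt (conc (R \<mu>) (P1 \<mu>)) m) \<le> c * (g + e) ^ m"
        by (rule growth_conc[OF c1(2) c2(2)]) (use g0 e c1 c2 in auto)
    qed
  qed
  have cb2: "\<exists>c>0. \<forall>m. real (cnt C2 m) \<le> c * (g + e) ^ m" if e: "e > 0" for e
    unfolding C2_def
  proof (rule growth_UN[OF finM])
    show "0 \<le> g + e" using g0 e by simp
    show "\<forall>\<mu>\<in>M. \<exists>c>0. \<forall>m. real (cnt (conc (R \<mu>) (P2 \<mu>)) m) \<le> c * (g + e) ^ m"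
    proof
      fix \<mu> assume mu: "\<mu> \<in> M"
      have "growth (R \<mu>) < g + e" using gR[OF mu] e by linarith
      then obtain c1 where c1: "c1 > 0" "\<forall>k. real (cnt (R \<mu>) k) \<le> c1 * (g + e) ^ k"
        using growth_bound by blast
      obtain K where K: "\<forall>u\<in>P2 \<mu>. \<exists>t. length t \<le> K \<and> u @ t \<in> wb ` BB \<mu>"
        using BB_K2[of \<mu>] unfolding P2_def by blast
      have "growth (wb ` BB \<mu>) = growth (BB \<mu>)" by (rule growth_cong) (rule cnt_wb)
      then have "growth (wb ` BB \<mu>) < g + e / 2" using gB[OF mu] e by linarith
      then obtain c2 where c2: "c2 > 0" "\<forall>k. real (cnt (P2 \<mu>) k) \<le> c2 * (g + e / 2) ^ k"
        using growth_pref[OF K] by blast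
      show "\<exists>c>0. \<forall>m. real (cnt (conc (R \<mu>) (P2 \<mu>)) m) \<le> c * (g + e) ^ m"
        by (rule growth_conc[OF c1(2) c2(2)]) (use g0 e c1 c2 in auto)
    qed
  qed
  have sp1: "\<forall>z\<in>L1. length z = n \<longrightarrow> take (n - \<kappa>) z \<in> C1" for n
  proof (intro ballI impI)
    fix z assume z: "z \<in> L1" "length z = n"
    obtain \<alpha> u v where a: "length \<alpha> = \<kappa>" "z = u @ \<alpha> @ v @ wb \<alpha>" using h1 z(1) by blast
    define x where "x = u @ \<alpha>"
    have kx: "\<kappa> \<le> length x" unfolding x_def using a by simp
    have dx: "drop (length x - \<kappa>) x = \<alpha>" unfolding x_def using a by simp
    have "foldl d1 q01 z \<in> F1" using z(1) unfolding L1 dfa_lang_def by simp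
    then have tr: "foldl d1 (foldl d1 q01 (x @ v)) (wb (drop (length x - \<kappa>) x)) \<in> F1 \<or>
                foldl d2 (foldl d2 q02 (x @ wb v)) (wb (drop (length x - \<kappa>) x)) \<in> F2"
      unfolding dx using a(2) unfolding x_def by simp
    obtain \<mu> x' y where mu: "\<mu> \<in> M" "x' \<in> R \<mu>" "x = x' @ y" "y @ v @ wb y \<in> BB \<mu>"
      using aut_exists[OF kx tr] by blast
    have zz: "z = (x @ v) @ wb \<alpha>" "n - \<kappa> = length (x @ v)" using a z(2) unfolding x_def by auto
    have tk: "take (n - \<kappa>) z = x' @ (y @ v)" unfolding zz using mu(3) by simp
    have "y @ v \<in> P1 \<mu>" unfolding P1_def using mu(4) by (intro CollectI exI[of _ "wb y"]) simp
    then show "take (n - \<kappa>) z \<in> C1" unfolding C1_def tk conc_def using mu(1,2) by blast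
  qed
  have sp2: "\<forall>z\<in>wb ` L2. length z = n \<longrightarrow> take (n - \<kappa>) z \<in> C2" for n
  proof (intro ballI impI)
    fix z assume z: "z \<in> wb ` L2" "length z = n"
    have "wb z \<in> L2" using z(1) unfolding wb_img .
    then obtain \<alpha> u v where a: "length \<alpha> = \<kappa>" "wb z = \<alpha> @ v @ wb \<alpha> @ u" using h2 by blast
    have zd: "z = wb u @ \<alpha> @ wb v @ wb \<alpha>"
    proof -
      have "z = wb (wb z)" by simp
      also have "\<dots> = wb u @ \<alpha> @ wb v @ wb \<alpha>" unfolding a(2) by simp
      finally show ?thesis .
    qed
    define x where "x = wb u @ \<alpha>"
    have kx: "\<kappa> \<le> length x" unfolding x_def using a by simp
    have dx: "drop (length x - \<kappa>) x = \<alpha>" unfolding x_def using a by simp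
    have "foldl d2 q02 z \<in> F2" using z(1) unfolding L2 dfa_lang_def by simp
    then have tr: "foldl d1 (foldl d1 q01 (x @ v)) (wb (drop (length x - \<kappa>) x)) \<in> F1 \<or>
                foldl d2 (foldl d2 q02 (x @ wb v)) (wb (drop (length x - \<kappa>) x)) \<in> F2"
      unfolding dx using zd unfolding x_def by simp
    obtain \<mu> x' y where mu: "\<mu> \<in> M" "x' \<in> R \<mu>" "x = x' @ y" "y @ v @ wb y \<in> BB \<mu>"
      using aut_exists[OF kx tr] by blast
    have zz: "z = (x @ wb v) @ wb \<alpha>" "n - \<kappa> = length (x @ wb v)" using a zd z(2) unfolding x_def by auto
    have tk: "take (n - \<kappa>) z = x' @ (y @ wb v)" unfolding zz using mu(3) by simp
    have "(y @ wb v) @ wb y \<in> wb ` BB \<mu>" unfolding wb_img using mu(4) by simp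
    then have "y @ wb v \<in> P2 \<mu>" unfolding P2_def by blast
    then show "take (n - \<kappa>) z \<in> C2" unfolding C2_def tk conc_def using mu(1,2) by blast
  qed
  have sm1: "\<forall>n<\<kappa>. cnt L1 n = 0"
  proof (intro allI impI)
    fix n assume n: "n < \<kappa>"
    have e: "{w\<in>L1. length w = n} = {}"
    proof (rule ccontr)
      assume "{w\<in>L1. length w = n} \<noteq> {}"
      then obtain z where "z \<in> L1" "length z = n" by blast
      then show False using h1 n by fastforce
    qed
    show "cnt L1 n = 0" unfolding cnt_def e by simp
  qed
  have sm2: "\<forall>n<\<kappa>. cnt (wb ` L2) n = 0"
  proof (intro allI impI)
    fix n assume n: "n < \<kappa>"
    have e: "{w\<in>wb ` L2. length w = n} = {}"
    proof (rule ccontr)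
      assume "{w\<in>wb ` L2. length w = n} \<noteq> {}"
      then obtain z where "z \<in> L2" "length z = n" by auto
      then show False using h2 n by fastforce
    qed
    show "cnt (wb ` L2) n = 0" unfolding cnt_def e by simp
  qed
  have gL1: "growth L1 \<le> g"
    by (rule growth_from_split[OF g0 cb1 _ sm1]) (use cnt_split[OF sp1] in auto)
  have gL2': "growth (wb ` L2) \<le> g"
    by (rule growth_from_split[OF g0 cb2 _ sm2]) (use cnt_split[OF sp2] in auto)
  have "growth (wb ` L2) = growth L2" by (rule growth_cong) (rule cnt_wb)
  then have gL2: "growth L2 \<le> g" using gL2' by simp
  have "?lam \<le> g" using gL1 gL2 by simp
  moreover have "g \<le> ?lam" unfolding g_def using s_le r_le by simp
  ultimately show ?thesis unfolding g_def by (rule antisym)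
qed

end

theorem lemma12:
  fixes bar :: "'a::finite \<Rightarrow> 'a" and \<kappa> :: nat
    and d1 :: "'q1::finite \<Rightarrow> 'a \<Rightarrow> 'q1" and q01 :: 'q1 and F1 :: "'q1 set"
    and d2 :: "'q2::finite \<Rightarrow> 'a \<Rightarrow> 'q2" and q02 :: 'q2 and F2 :: "'q2 set"
    and L1 L2 :: "'a list set"
  assumes "card (UNIV :: 'a set) \<ge> 2"
    and "\<forall>a. bar (bar a) = a"
    and "\<kappa> > 0"
    and "L1 = dfa_lang d1 q01 F1"
    and "wbar bar ` L2 = dfa_lang d2 q02 F2"
    and "\<forall>w \<in> L1. \<exists>\<alpha> u v. length \<alpha> = \<kappa> \<and> w = u @ \<alpha> @ v @ wbar bar \<alpha>"
    and "\<forall>w \<in> L2. \<exists>\<alpha> u v. length \<alpha> = \<kappa> \<and> w = \<alpha> @ v @ wbar bar \<alpha> @ u"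
  shows "max (growth L1) (growth L2) =
         max (sigma_max bar \<kappa> d1 q01 F1 d2 q02 F2) (rho_max bar \<kappa> d1 q01 F1 d2 q02 F2)"
proof -
  interpret AA bar \<kappa> d1 q01 F1 d2 q02 F2 using assms(2,3) by unfold_locales auto
  show ?thesis by (rule main_AA[OF assms(4-7)])
qed


end
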